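(* Let $\mathcal F=\{F^c_{t,k}\}$ be an F-system and $R,\lambda$ reals such that $|F^A_t\cup F^B_t|\le Rt+\lambda$ for every positive integer $t$. Then for every even positive integer $t$, $|Z_{3t,2t}|\ge|S_t\cup Z_{3t/2,t}|-(3R-4)t-\lambda$.
   Context: F-system: a family $\mathcal F=\{F^c_{t,k}\}$ of sets of positive integers, indexed by $c\in\{A,B\}$ and integers $0<k\le t$, such that (F1) $|F^c_{t,k}|\ge k$ for all $c,t,k$; and (F2) $F^A_{t,k}\cap F^B_{t',k'}=\emptyset$ for all $k\le t$, $k'\le t'$ with $k+k'\le\max(t,t')$. Notation: $F^c_t=\bigcup_{0<\kappa\le\tau\le t}F^c_{\tau,\kappa}$ for $c\in\{A,B\}$; $S_t=F^A_t\cap F^B_t$; for even $t$, $Z_{3t/2,t}=F^A_{3t/2,t}\cap F^B_{3t/2,t}$ (so also $Z_{3t,2t}=F^A_{3t,2t}\cap F^B_{3t,2t}$). *)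

theory Defs
  imports Complex_Main
begin

datatype colour = A | B

text \<open>Values of F outside this index range are irrelevant.  Condition (F1) |F| >= k is
  read with the convention that an infinite set has cardinality infinity.\<close>

definition F_system :: "(colour \<Rightarrow> nat \<Rightarrow> nat \<Rightarrow> nat set) \<Rightarrow> bool" where
  "F_system F \<longleftrightarrow>
     (\<forall>c t k. 0 < k \<and> k \<le> t \<longrightarrow> F c t k \<subseteq> {0<..}) \<and>
     (\<forall>c t k. 0 < k \<and> k \<le> t \<longrightarrow> (infinite (F c t k) \<or> k \<le> card (F c t k))) \<and>
     (\<forall>t k t' k'. 0 < k \<and> k \<le> t \<and> 0 < k' \<and> k' \<le> t' \<and> k + k' \<le> max t t'
         \<longrightarrow> F A t k \<inter> F B t' k' = {})"

definition Fcum :: "(colour \<Rightarrow> nat \<Rightarrow> nat \<Rightarrow> nat set) \<Rightarrow> colour \<Rightarrow> nat \<Rightarrow> nat set" where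
  "Fcum F c t = (\<Union>\<tau>\<in>{1..t}. \<Union>\<kappa>\<in>{1..\<tau>}. F c \<tau> \<kappa>)"

definition Sset :: "(colour \<Rightarrow> nat \<Rightarrow> nat \<Rightarrow> nat set) \<Rightarrow> nat \<Rightarrow> nat set" where
  "Sset F t = Fcum F A t \<inter> Fcum F B t"

definition Zset :: "(colour \<Rightarrow> nat \<Rightarrow> nat \<Rightarrow> nat set) \<Rightarrow> nat \<Rightarrow> nat \<Rightarrow> nat set" where
  "Zset F t k = F A t k \<inter> F B t k"

end

theory Submission
  imports Defs
begin

theorem lemma5:
  fixes F :: "colour \<Rightarrow> nat \<Rightarrow> nat \<Rightarrow> nat set" and R lam :: real
  assumes "F_system F"
    and "\<forall>t>0. finite (Fcum F A t \<union> Fcum F B t) \<and>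
              real (card (Fcum F A t \<union> Fcum F B t)) \<le> R * real t + lam"
    and "even t" and "0 < t"
  shows "real (card (Zset F (3 * t) (2 * t)))
           \<ge> real (card (Sset F t \<union> Zset F (3 * t div 2) t)) - (3 * R - 4) * real t - lam"
proof -
  define U where "U = Fcum F A (3*t) \<union> Fcum F B (3*t)"
  define P where "P = F A (3*t) (2*t)"
  define Q where "Q = F B (3*t) (2*t)"
  define W where "W = Sset F t \<union> Zset F (3 * t div 2) t"
  have fs: "F_system F" by fact
  have disj: "\<And>t k t' k'. 0 < k \<Longrightarrow> k \<le> t \<Longrightarrow> 0 < k' \<Longrightarrow> k' \<le> t' \<Longrightarrow> k + k' \<le> max t t'
         \<Longrightarrow> F A t k \<inter> F B t' k' = {}"
    using fs unfolding F_system_def by blast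
  have h: "3 * t div 2 \<ge> t" "3 * t div 2 \<le> 3*t" "2 * (3*t div 2) = 3*t" using assms(3) by auto
  have Uf: "finite U" and Ub: "real (card U) \<le> R * real (3*t) + lam"
    using spec[OF assms(2), of "3*t"] assms(4) unfolding U_def by auto
  have PU: "P \<subseteq> U" unfolding U_def P_def Fcum_def using assms(4) by force
  have QU: "Q \<subseteq> U" unfolding U_def Q_def Fcum_def using assms(4) by force
  have WU: "W \<subseteq> U" unfolding U_def W_def Sset_def Zset_def Fcum_def using assms(4) h
    by (auto intro!: bexI[of _ "3*t div 2"] bexI[of _ t])
  have SP: "Sset F t \<inter> P = {}"
  proof -
    have "F A (3*t) (2*t) \<inter> F B \<tau> \<kappa> = {}" if "\<tau> \<in> {1..t}" "\<kappa> \<in> {1..\<tau>}" for \<tau> \<kappa>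
      using that assms(4) by (intro disj) auto
    thus ?thesis unfolding Sset_def P_def Fcum_def by blast
  qed
  have SQ: "Sset F t \<inter> Q = {}"
  proof -
    have "F A \<tau> \<kappa> \<inter> F B (3*t) (2*t) = {}" if "\<tau> \<in> {1..t}" "\<kappa> \<in> {1..\<tau>}" for \<tau> \<kappa>
      using that assms(4) by (intro disj) auto
    thus ?thesis unfolding Sset_def Q_def Fcum_def by blast
  qed
  have ZP: "Zset F (3 * t div 2) t \<inter> P = {}"
    using disj[of "2*t" "3*t" t "3*t div 2"] h assms(4) unfolding Zset_def P_def by auto
  have ZQ: "Zset F (3 * t div 2) t \<inter> Q = {}"
    using disj[of t "3*t div 2" "2*t" "3*t"] h assms(4) unfolding Zset_def Q_def by auto
  have WPQ: "W \<inter> (P \<union> Q) = {}" using SP SQ ZP ZQ unfolding W_def by blast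
  have fP: "finite P" "finite Q" "finite W" using PU QU WU Uf finite_subset by blast+
  have cP: "2*t \<le> card P" "2*t \<le> card Q"
    using fs fP assms(4) unfolding F_system_def P_def Q_def by auto
  have "card (W \<union> (P \<union> Q)) \<le> card U"
    using PU QU WU Uf by (intro card_mono) auto
  moreover have "card (W \<union> (P \<union> Q)) = card W + card (P \<union> Q)"
    using WPQ fP by (simp add: card_Un_disjoint)
  moreover have "card (P \<union> Q) + card (P \<inter> Q) = card P + card Q"
    using fP card_Un_Int by metis
  ultimately have "card W + 4*t \<le> card U + card (P \<inter> Q)" using cP by linarith
  hence "real (card W) + 4 * real t \<le> real (card U) + real (card (P \<inter> Q))" by linarith
  hence "real (card W) + 4 * real t \<le> R * real (3*t) + lam + real (card (P \<inter> Q))"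
    using Ub by linarith
  thus ?thesis unfolding W_def P_def Q_def Zset_def by (simp add: algebra_simps)
qed

end
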